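(* Let $V$ be a smooth $A[G]$-module and $0<r\le s$ (allowing $s=\infty$). Then the inclusion $V^{U_1(\varpi^r)}\subset V^{U_1(\varpi^s)}$ is $A[X]$-linear, where $X_j$ acts by $U^{(j)}$ on both sides. Moreover, if $V$ is $A$-torsion free, then so is the quotient $V^{U_1(\varpi^s)}/V^{U_1(\varpi^r)}$.
   Context: Let $F/\mathbb{Q}_p$ be finite with ring of integers $\mathcal{O}_F$, uniformizer $\varpi$, residue field $k_F$; let $K/\mathbb{Q}_\ell$ ($\ell\ne p$) be finite with ring of integers $\mathcal{O}$, maximal ideal $\lambda$, residue field $k$; $G=\mathrm{GL}_n(F)$, and assume $\ell\nmid\#\mathrm{GL}_n(k_F)$. $A$ is an $\mathcal{O}$-algebra; smooth $A[G]$-modules are those equal to the union of their invariants under compact open subgroups. For $1\le r<\infty$, the mirahoric subgroup $U_1(\varpi^r)$ consists of $u\in\mathrm{GL}_n(\mathcal{O}_F)$ whose last row is congruent to $(0,\dots,0,1)$ mod $\varpi^r$; $U_1(\varpi^\infty)=P(\mathcal{O}_F)$ is the intersection of all of them, $P$ being the mirabolic subgroup (last row $(0,\dots,0,1)$). For $j=1,\dots,n-1$ let $\alpha_j=\mathrm{diag}(\varpi 1_j,1_{n-j})$ and let $U^{(j)}$ be the double coset operator $[U_1(\varpi^r)\alpha_jU_1(\varpi^r)]$ acting on $V^{U_1(\varpi^r)}$ by $x\mapsto\sum_{\beta}\beta x$, $\beta$ running over $U_1(\varpi^r)\alpha_jU_1(\varpi^r)/U_1(\varpi^r)$. These operators commute,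 so $V^{U_1(\varpi^r)}$ is a module over $A[X]=A[X_1,\dots,X_{n-1}]$ with $X_j\mapsto U^{(j)}$. An $A$-module $M$ is $A$-torsion free if $am=0$ with $a\in A$, $m\in M$ implies $m=0$ or $a$ is a zero-divisor of $A$. *)

theory Defs
  imports "HOL-Analysis.Abstract_Metric_Spaces" "Jordan_Normal_Form.Determinant"
    "HOL-Library.Extended_Nat"
begin

text \<open>v is a normalized discrete valuation on F (its values on 0 are irrelevant).\<close>

definition val_ring :: "('f::field \<Rightarrow> int) \<Rightarrow> 'f set" where
  "val_ring v = {x. x = 0 \<or> 0 \<le> v x}"

text \<open>x is congruent to y modulo the k-th power of the maximal ideal\<close>
definition val_cong :: "('f::field \<Rightarrow> int) \<Rightarrow> int \<Rightarrow> 'f \<Rightarrow> 'f \<Rightarrow> bool" where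
  "val_cong v k x y \<longleftrightarrow> x = y \<or> k \<le> v (x - y)"

definition residue_classes :: "('f::field \<Rightarrow> int) \<Rightarrow> 'f set set" where
  "residue_classes v = (\<lambda>x. {y \<in> val_ring v. val_cong v 1 y x}) ` val_ring v"

definition residue_card :: "('f::field \<Rightarrow> int) \<Rightarrow> nat" where
  "residue_card v = card (residue_classes v)"

text \<open>F is a finite extension of Q_p, presented as a complete, discretely (normalized)
  valued field of characteristic 0 with finite residue field of characteristic p.\<close>
definition p_adic_local_field :: "nat \<Rightarrow> ('f::field_char_0 \<Rightarrow> int) \<Rightarrow> bool" where
  "p_adic_local_field p v \<longleftrightarrow>
     prime p \<and>
     (\<forall>x y. x \<noteq> 0 \<longrightarrow> y \<noteq> 0 \<longrightarrow> v (x * y) = v x + v y) \<and>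
     (\<forall>x y. x \<noteq> 0 \<longrightarrow> y \<noteq> 0 \<longrightarrow> x + y \<noteq> 0 \<longrightarrow> min (v x) (v y) \<le> v (x + y)) \<and>
     (\<forall>k. \<exists>x. x \<noteq> 0 \<and> v x = k) \<and>
     0 < v (of_nat p) \<and>
     finite (residue_classes v) \<and>
     (\<forall>f :: nat \<Rightarrow> 'f. (\<forall>N. \<exists>M. \<forall>m\<ge>M. \<forall>k\<ge>M. val_cong v N (f m) (f k)) \<longrightarrow>
        (\<exists>L. \<forall>N. \<exists>M. \<forall>m\<ge>M. val_cong v N (f m) L))"

text \<open>Order of GL_n over a finite field with q elements.\<close>
definition gl_card :: "nat \<Rightarrow> nat \<Rightarrow> nat" where
  "gl_card q n = (\<Prod>i<n. (q ^ n - q ^ i))"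

text \<open>A structure of O-algebra on A, O the valuation ring of K (valuation w).\<close>
definition O_algebra :: "('k::field \<Rightarrow> int) \<Rightarrow> ('k \<Rightarrow> 'a::comm_ring_1) \<Rightarrow> bool" where
  "O_algebra w \<iota> \<longleftrightarrow> \<iota> 1 = 1 \<and>
     (\<forall>x\<in>val_ring w. \<forall>y\<in>val_ring w. \<iota> (x + y) = \<iota> x + \<iota> y \<and> \<iota> (x * y) = \<iota> x * \<iota> y)"

definition GLn :: "nat \<Rightarrow> 'f::field mat set" where
  "GLn n = {g \<in> carrier_mat n n. det g \<noteq> 0}"

definition val_abs :: "('f::field \<Rightarrow> int) \<Rightarrow> 'f \<Rightarrow> real" where
  "val_abs v x = (if x = 0 then 0 else 2 powr (- real_of_int (v x)))"

definition mat_dist :: "('f::field \<Rightarrow> int) \<Rightarrow> nat \<Rightarrow> 'f mat \<Rightarrow> 'f mat \<Rightarrow> real" where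
  "mat_dist v n A B = (if n = 0 then 0 else
     Max {val_abs v (A $$ (i, j) - B $$ (i, j)) | i j. i < n \<and> j < n})"

definition mat_topology :: "('f::field \<Rightarrow> int) \<Rightarrow> nat \<Rightarrow> 'f mat topology" where
  "mat_topology v n = Metric_space.mtopology (carrier_mat n n) (mat_dist v n)"

definition compact_open_subgroup :: "('f::field \<Rightarrow> int) \<Rightarrow> nat \<Rightarrow> 'f mat set \<Rightarrow> bool" where
  "compact_open_subgroup v n H \<longleftrightarrow>
     H \<subseteq> GLn n \<and> 1\<^sub>m n \<in> H \<and> (\<forall>g\<in>H. \<forall>h\<in>H. g * h \<in> H) \<and>
     (\<forall>g\<in>H. \<exists>h\<in>H. g * h = 1\<^sub>m n) \<and>
     openin (mat_topology v n) H \<and> compactin (mat_topology v n) H"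

definition smooth_rep :: "('f::field \<Rightarrow> int) \<Rightarrow> nat \<Rightarrow> ('a::comm_ring_1 \<Rightarrow> 'v::ab_group_add \<Rightarrow> 'v)
    \<Rightarrow> ('f mat \<Rightarrow> 'v \<Rightarrow> 'v) \<Rightarrow> bool" where
  "smooth_rep v n sm act \<longleftrightarrow>
     Modules.module sm \<and>
     (\<forall>g\<in>GLn n. \<forall>h\<in>GLn n. \<forall>x. act (g * h) x = act g (act h x)) \<and>
     (\<forall>x. act (1\<^sub>m n) x = x) \<and>
     (\<forall>g\<in>GLn n. \<forall>x y. act g (x + y) = act g x + act g y) \<and>
     (\<forall>g\<in>GLn n. \<forall>a x. act g (sm a x) = sm a (act g x)) \<and>
     (\<forall>x. \<exists>H. compact_open_subgroup v n H \<and> (\<forall>h\<in>H. act h x = x))"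

definition invariants :: "('m \<Rightarrow> 'v \<Rightarrow> 'v) \<Rightarrow> 'm set \<Rightarrow> 'v set" where
  "invariants act U = {x. \<forall>u\<in>U. act u x = x}"

definition GLn_O :: "('f::field \<Rightarrow> int) \<Rightarrow> nat \<Rightarrow> 'f mat set" where
  "GLn_O v n = {g \<in> carrier_mat n n. (\<forall>i<n. \<forall>j<n. g $$ (i, j) \<in> val_ring v) \<and>
                  det g \<noteq> 0 \<and> v (det g) = 0}"

definition U1_fin :: "('f::field \<Rightarrow> int) \<Rightarrow> nat \<Rightarrow> nat \<Rightarrow> 'f mat set" where
  "U1_fin v n r = {u \<in> GLn_O v n.
      \<forall>k<n. val_cong v (int r) (u $$ (n - 1, k)) (if k = n - 1 then 1 else 0)}"

definition U1 :: "('f::field \<Rightarrow> int) \<Rightarrow> nat \<Rightarrow> enat \<Rightarrow> 'f mat set" where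
  "U1 v n s = (case s of enat r \<Rightarrow> U1_fin v n r | \<infinity> \<Rightarrow> (\<Inter>r\<in>{1..}. U1_fin v n r))"

definition alpha :: "'f::field \<Rightarrow> nat \<Rightarrow> nat \<Rightarrow> 'f mat" where
  "alpha unif n j = mat n n (\<lambda>(i, k). if i = k then (if i < j then unif else 1) else 0)"

definition double_coset :: "'f::field mat set \<Rightarrow> 'f mat \<Rightarrow> 'f mat set" where
  "double_coset U g = {a * g * b | a b. a \<in> U \<and> b \<in> U}"

definition left_cosets_in :: "'f::field mat set \<Rightarrow> 'f mat set \<Rightarrow> 'f mat set set" where
  "left_cosets_in D U = {(\<lambda>u. h * u) ` U | h. h \<in> D}"

text \<open>[U g U] acting on V^U: x maps to the sum over beta in UgU/U of beta x.\<close>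
definition hecke :: "('f::field mat \<Rightarrow> 'v::ab_group_add \<Rightarrow> 'v) \<Rightarrow> 'f mat set \<Rightarrow> 'f mat \<Rightarrow> 'v \<Rightarrow> 'v" where
  "hecke act U g x = (\<Sum>C\<in>left_cosets_in (double_coset U g) U. act (SOME h. h \<in> C) x)"

definition zero_divisor :: "'a::comm_ring_1 \<Rightarrow> bool" where
  "zero_divisor a \<longleftrightarrow> (\<exists>b. b \<noteq> 0 \<and> a * b = 0)"

definition torsion_free :: "('a::comm_ring_1 \<Rightarrow> 'v::ab_group_add \<Rightarrow> 'v) \<Rightarrow> 'v set \<Rightarrow> bool" where
  "torsion_free sm M \<longleftrightarrow> (\<forall>a. \<forall>x\<in>M. sm a x = 0 \<longrightarrow> x = 0 \<or> zero_divisor a)"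

end

theory Submission
  imports Defs
begin

definition valuation :: "('f::field \<Rightarrow> int) \<Rightarrow> bool" where
  "valuation v \<longleftrightarrow> (\<forall>x y. x \<noteq> 0 \<longrightarrow> y \<noteq> 0 \<longrightarrow> v (x * y) = v x + v y) \<and>
     (\<forall>x y. x \<noteq> 0 \<longrightarrow> y \<noteq> 0 \<longrightarrow> x + y \<noteq> 0 \<longrightarrow> min (v x) (v y) \<le> v (x + y))"

definition Iv :: "('f::field \<Rightarrow> int) \<Rightarrow> enat \<Rightarrow> 'f set" where
  "Iv v s = {x. x = 0 \<or> (\<forall>r. enat r \<le> s \<longrightarrow> int r \<le> v x)}"

lemma valuation_of_local: "p_adic_local_field p v \<Longrightarrow> valuation v"
  unfolding p_adic_local_field_def valuation_def by blast

context
  fixes v :: "'f::field \<Rightarrow> int"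
  assumes val: "valuation v"
begin

lemma vmult: "x \<noteq> 0 \<Longrightarrow> y \<noteq> 0 \<Longrightarrow> v (x * y) = v x + v y"
  using val unfolding valuation_def by blast

lemma vultra: "x \<noteq> 0 \<Longrightarrow> y \<noteq> 0 \<Longrightarrow> x + y \<noteq> 0 \<Longrightarrow> min (v x) (v y) \<le> v (x + y)"
  using val unfolding valuation_def by blast

lemma v1: "v 1 = 0"
  using vmult[of 1 1] by simp

lemma vm1: "v (-1) = 0"
  using vmult[of "-1" "-1"] v1 by simp

lemma vneg: "x \<noteq> 0 \<Longrightarrow> v (- x) = v x"
  using vmult[of "-1" x] vm1 by simp

lemma Iv0[simp]: "0 \<in> Iv v s" unfolding Iv_def by simp

lemma Iv_add: assumes "x \<in> Iv v s" "y \<in> Iv v s" shows "x + y \<in> Iv v s"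
proof (cases "x = 0 \<or> y = 0 \<or> x + y = 0")
  case True then show ?thesis using assms by auto
next
  case False
  then have nz: "x \<noteq> 0" "y \<noteq> 0" "x + y \<noteq> 0" by auto
  have m: "min (v x) (v y) \<le> v (x + y)" using vultra[OF nz] .
  have "int r \<le> v (x + y)" if "enat r \<le> s" for r
  proof -
    have "int r \<le> v x" "int r \<le> v y" using assms nz that unfolding Iv_def by auto
    then show ?thesis using m by linarith
  qed
  then show ?thesis unfolding Iv_def by auto
qed

lemma Iv_uminus: "x \<in> Iv v s \<Longrightarrow> - x \<in> Iv v s"
  unfolding Iv_def using vneg by (cases "x = 0") auto

lemma Iv_diff: "x \<in> Iv v s \<Longrightarrow> y \<in> Iv v s \<Longrightarrow> x - y \<in> Iv v s"
  using Iv_add[of x s "-y"] Iv_uminus[of y s] by simp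

lemma val_ring_Iv: "val_ring v = Iv v 0"
  unfolding val_ring_def Iv_def by (auto simp: zero_enat_def)

lemma Iv_mult: assumes "x \<in> Iv v s" "y \<in> val_ring v" shows "x * y \<in> Iv v s"
proof (cases "x = 0 \<or> y = 0")
  case True then show ?thesis by auto
next
  case False
  then have nz: "x \<noteq> 0" "y \<noteq> 0" by auto
  have m: "v (x * y) = v x + v y" using vmult[OF nz] .
  have y0: "0 \<le> v y" using assms(2) nz unfolding val_ring_def by auto
  have "int r \<le> v (x * y)" if "enat r \<le> s" for r
  proof -
    have "int r \<le> v x" using assms nz that unfolding Iv_def by auto
    then show ?thesis using m y0 by linarith
  qed
  then show ?thesis unfolding Iv_def by auto
qed

lemma Iv_mult': "x \<in> Iv v s \<Longrightarrow> y \<in> val_ring v \<Longrightarrow> y * x \<in> Iv v s"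
  using Iv_mult by (simp add: mult.commute)

lemma Iv_mono: "s \<le> s' \<Longrightarrow> Iv v s' \<subseteq> Iv v s"
  unfolding Iv_def using order_trans by blast

lemma Iv_sum: "finite A \<Longrightarrow> (\<And>a. a \<in> A \<Longrightarrow> f a \<in> Iv v s) \<Longrightarrow> sum f A \<in> Iv v s"
  by (induction A rule: finite_induct) (simp_all add: Iv_add)

lemma O_0[simp]: "0 \<in> val_ring v" unfolding val_ring_def by simp
lemma O_1[simp]: "1 \<in> val_ring v" unfolding val_ring_def using v1 by simp
lemma O_m1[simp]: "-1 \<in> val_ring v" unfolding val_ring_def using vm1 by simp

lemma O_add: "x \<in> val_ring v \<Longrightarrow> y \<in> val_ring v \<Longrightarrow> x + y \<in> val_ring v"
  unfolding val_ring_Iv by (rule Iv_add)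
lemma O_uminus: "x \<in> val_ring v \<Longrightarrow> - x \<in> val_ring v"
  unfolding val_ring_Iv by (rule Iv_uminus)
lemma O_mult: "x \<in> val_ring v \<Longrightarrow> y \<in> val_ring v \<Longrightarrow> x * y \<in> val_ring v"
  using Iv_mult[of x 0 y] unfolding val_ring_Iv by simp
lemma O_sum: "finite A \<Longrightarrow> (\<And>a. a \<in> A \<Longrightarrow> f a \<in> val_ring v) \<Longrightarrow> sum f A \<in> val_ring v"
  unfolding val_ring_Iv by (rule Iv_sum)
lemma O_prod: "finite A \<Longrightarrow> (\<And>a. a \<in> A \<Longrightarrow> f a \<in> val_ring v) \<Longrightarrow> prod f A \<in> val_ring v"
  by (induction A rule: finite_induct) (simp_all add: O_mult)
lemma O_power: "x \<in> val_ring v \<Longrightarrow> x ^ k \<in> val_ring v"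
  by (induction k) (auto intro: O_mult)
lemma Iv_sub_O: "Iv v s \<subseteq> val_ring v"
  unfolding val_ring_Iv by (rule Iv_mono) simp

lemma O_inverse: "d \<noteq> 0 \<Longrightarrow> v d = 0 \<Longrightarrow> 1 / d \<in> val_ring v \<and> v (1 / d) = 0"
proof -
  assume a: "d \<noteq> 0" "v d = 0"
  have "v (d * (1/d)) = v d + v (1/d)" using vmult[of d "1/d"] a by simp
  then have "v (1/d) = 0" using a v1 by simp
  then show ?thesis unfolding val_ring_def by simp
qed

lemma v_unit: assumes "y \<in> Iv v 1" shows "1 + y \<noteq> 0 \<and> v (1 + y) = 0"
proof (cases "y = 0")
  case True then show ?thesis using v1 by simp
next
  case False
  have "\<forall>r. enat r \<le> 1 \<longrightarrow> int r \<le> v y" using assms False unfolding Iv_def by auto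
  moreover have "enat 1 \<le> 1" by (simp add: one_enat_def)
  ultimately have "int 1 \<le> v y" by blast
  then have vy: "1 \<le> v y" by simp
  have ne: "1 + y \<noteq> 0"
  proof
    assume "1 + y = 0" then have "y = -1" by (simp add: add_eq_0_iff)
    then show False using vy vm1 by simp
  qed
  have "min (v 1) (v y) \<le> v (1 + y)" using vultra[of 1 y] ne False by simp
  then have a: "0 \<le> v (1 + y)" using v1 vy by simp
  have "min (v (1 + y)) (v (- y)) \<le> v (1 + y + - y)" using vultra[of "1+y" "-y"] ne False by simp
  then have "v (1 + y) \<le> 0" using v1 vneg[OF False] vy by simp
  then show ?thesis using a ne by simp
qed

end


lemma Iv_zero[simp]: "0 \<in> Iv v s" unfolding Iv_def by simp

lemma mult_entry:
  assumes "A \<in> carrier_mat n m" "B \<in> carrier_mat m p" "i < n" "k < p"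
  shows "(A * B) $$ (i, k) = (\<Sum>l<m. A $$ (i, l) * B $$ (l, k))"
  using assms by (auto simp: scalar_prod_def atLeast0LessThan intro!: sum.cong)

context
  fixes v :: "'f::field \<Rightarrow> int"
  assumes val: "valuation v"
begin

lemma signof_O: "(signof p :: 'f) \<in> val_ring v"
  by (cases p rule: sign_cases) (simp_all add: O_1[OF val] O_m1[OF val])

lemma det_O:
  assumes A: "A \<in> carrier_mat n n" and O: "\<And>i j. i < n \<Longrightarrow> j < n \<Longrightarrow> A $$ (i, j) \<in> val_ring v"
  shows "det A \<in> val_ring v"
proof -
  have "det A = (\<Sum> p \<in> {p. p permutes {0 ..< n}}. signof p * (\<Prod> i = 0 ..< n. A $$ (i, p i)))"
    by (rule det_def'[OF A])
  also have "\<dots> \<in> val_ring v"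
  proof (rule O_sum[OF val])
    show "finite {p. p permutes {0..<n}}" by (rule finite_permutations) simp
  next
    fix p assume p: "p \<in> {p. p permutes {0..<n}}"
    have "(\<Prod> i = 0 ..< n. A $$ (i, p i)) \<in> val_ring v"
    proof (rule O_prod[OF val])
      fix i assume "i \<in> {0..<n}"
      then have "i < n" "p i < n" using p permutes_in_image[of p "{0..<n}" i] by auto
      then show "A $$ (i, p i) \<in> val_ring v" using O by blast
    qed simp
    then show "signof p * (\<Prod> i = 0 ..< n. A $$ (i, p i)) \<in> val_ring v"
      using O_mult[OF val] signof_O by blast
  qed
  finally show ?thesis .
qed

lemma mult_O:
  assumes A: "A \<in> carrier_mat n n" and B: "B \<in> carrier_mat n n"
    and OA: "\<And>i j. i < n \<Longrightarrow> j < n \<Longrightarrow> A $$ (i, j) \<in> val_ring v"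
    and OB: "\<And>i j. i < n \<Longrightarrow> j < n \<Longrightarrow> B $$ (i, j) \<in> val_ring v"
    and ij: "i < n" "j < n"
  shows "(A * B) $$ (i, j) \<in> val_ring v"
  unfolding mult_entry[OF A B ij]
  by (rule O_sum[OF val]) (auto intro!: O_mult[OF val] OA OB ij)

lemma GLn_O_mult:
  assumes "A \<in> GLn_O v n" "B \<in> GLn_O v n"
  shows "A * B \<in> GLn_O v n"
proof -
  have A: "A \<in> carrier_mat n n" and B: "B \<in> carrier_mat n n" using assms unfolding GLn_O_def by auto
  have d: "det (A * B) = det A * det B" by (rule det_mult[OF A B])
  have nz: "det A \<noteq> 0" "det B \<noteq> 0" "v (det A) = 0" "v (det B) = 0" using assms unfolding GLn_O_def by auto
  show ?thesis unfolding GLn_O_def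
    using A B mult_O[OF A B] assms d nz vmult[OF val, of "det A" "det B"]
    unfolding GLn_O_def by auto
qed

lemma one_GLn_O: "1\<^sub>m n \<in> GLn_O v n"
  unfolding GLn_O_def using v1[OF val] O_1[OF val] O_0[OF val] by auto

definition invm :: "'f mat \<Rightarrow> 'f mat" where
  "invm A = (1 / det A) \<cdot>\<^sub>m adj_mat A"

lemma invm:
  assumes A: "A \<in> carrier_mat n n" and d: "det A \<noteq> 0"
  shows "invm A \<in> carrier_mat n n" "A * invm A = 1\<^sub>m n" "invm A * A = 1\<^sub>m n"
proof -
  note adj = adj_mat[OF A]
  show "invm A \<in> carrier_mat n n" unfolding invm_def using adj by simp
  have "A * invm A = (1 / det A) \<cdot>\<^sub>m (A * adj_mat A)"
    unfolding invm_def by (rule mult_smult_distrib[OF A adj(1)])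
  also have "\<dots> = 1\<^sub>m n" unfolding adj(2) using d by (auto intro!: eq_matI)
  finally show "A * invm A = 1\<^sub>m n" .
  have "invm A * A = (1 / det A) \<cdot>\<^sub>m (adj_mat A * A)"
    unfolding invm_def by (rule mult_smult_assoc_mat[OF adj(1) A])
  also have "\<dots> = 1\<^sub>m n" unfolding adj(3) using d by (auto intro!: eq_matI)
  finally show "invm A * A = 1\<^sub>m n" .
qed

lemma invm_GLn_O:
  assumes "A \<in> GLn_O v n"
  shows "invm A \<in> GLn_O v n"
proof -
  have A: "A \<in> carrier_mat n n" and OA: "\<And>i j. i < n \<Longrightarrow> j < n \<Longrightarrow> A $$ (i, j) \<in> val_ring v"
    and d: "det A \<noteq> 0" "v (det A) = 0" using assms unfolding GLn_O_def by auto
  note I = invm[OF A d(1)]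
  have ent: "invm A $$ (i, j) \<in> val_ring v" if ij: "i < n" "j < n" for i j
  proof -
    have "invm A $$ (i, j) = (1 / det A) * cofactor A j i"
      unfolding invm_def adj_mat_def using A ij by simp
    moreover have "cofactor A j i \<in> val_ring v"
    proof -
      have "det (mat_delete A j i) \<in> val_ring v"
      proof (rule det_O)
        show "mat_delete A j i \<in> carrier_mat (n - 1) (n - 1)" using mat_delete_carrier[OF A] .
        fix a b assume ab: "a < n - 1" "b < n - 1"
        then show "mat_delete A j i $$ (a, b) \<in> val_ring v"
          unfolding mat_delete_def using A by (auto intro!: OA)
      qed
      then show ?thesis unfolding cofactor_def
        using O_mult[OF val] O_power[OF val O_m1[OF val]] by blast
    qed
    ultimately show ?thesis using O_mult[OF val, of "1 / det A" "cofactor A j i"] O_inverse[OF val d] by metis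
  qed
  have "det A * det (invm A) = 1" using det_mult[OF A I(1)] I(2) by simp
  then have nz: "det (invm A) \<noteq> 0" by auto
  have "v (det A * det (invm A)) = v (det A) + v (det (invm A))"
    using vmult[OF val, of "det A" "det (invm A)"] nz d by auto
  then have "v (det (invm A)) = 0" using d \<open>det A * det (invm A) = 1\<close> v1[OF val] by simp
  then show ?thesis unfolding GLn_O_def using I(1) ent nz by auto
qed

end


lemma sum_delta_last:
  assumes "1 \<le> (n::nat)"
  shows "(\<Sum>l<n. (if l = n - 1 then 1 else 0) * (b l :: 'a::comm_ring_1)) = b (n - 1)"
proof -
  have "(\<Sum>l<n. (if l = n - 1 then 1 else 0) * b l) = (\<Sum>l<n. if l = n - 1 then b l else 0)"
    by (rule sum.cong) auto
  also have "\<dots> = b (n - 1)" using assms by (simp add: sum.delta')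
  finally show ?thesis .
qed

lemma last_row_mult:
  fixes A B :: "'a::comm_ring_1 mat"
  assumes A: "A \<in> carrier_mat n n" and B: "B \<in> carrier_mat n n" and k: "k < n"
  shows "(A * B) $$ (n - 1, k) =
    (\<Sum>l<n. (A $$ (n - 1, l) - (if l = n - 1 then 1 else 0)) * B $$ (l, k)) + B $$ (n - 1, k)"
proof -
  have n: "1 \<le> n" using k by simp
  have "(\<Sum>l<n. (A $$ (n - 1, l) - (if l = n - 1 then 1 else 0)) * B $$ (l, k))
      = (\<Sum>l<n. A $$ (n - 1, l) * B $$ (l, k)) - (\<Sum>l<n. (if l = n - 1 then 1 else 0) * B $$ (l, k))"
    by (simp only: left_diff_distrib sum_subtractf)
  also have "(\<Sum>l<n. (if l = n - 1 then 1 else 0) * B $$ (l, k)) = B $$ (n - 1, k)"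
    by (rule sum_delta_last[OF n])
  finally show ?thesis using mult_entry[OF A B _ k, of "n - 1"] n by simp
qed

definition U1c :: "('f::field \<Rightarrow> int) \<Rightarrow> nat \<Rightarrow> enat \<Rightarrow> 'f mat set" where
  "U1c v n s = {u \<in> GLn_O v n. \<forall>k<n. u $$ (n - 1, k) - (if k = n - 1 then 1 else 0) \<in> Iv v s}"

lemma vc_Iv: "val_cong v (int r) x y \<longleftrightarrow> x - y \<in> Iv v (enat r)"
proof
  assume "val_cong v (int r) x y" then show "x - y \<in> Iv v (enat r)"
    unfolding val_cong_def Iv_def by auto
next
  assume a: "x - y \<in> Iv v (enat r)"
  show "val_cong v (int r) x y"
  proof (cases "x = y")
    case False
    then have "\<forall>r'. enat r' \<le> enat r \<longrightarrow> int r' \<le> v (x - y)" using a unfolding Iv_def by auto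
    then show ?thesis unfolding val_cong_def by auto
  qed (simp add: val_cong_def)
qed

lemma Iv_inf: "x \<in> Iv v \<infinity> \<longleftrightarrow> x = 0"
proof
  assume a: "x \<in> Iv v \<infinity>"
  show "x = 0"
  proof (rule ccontr)
    assume "x \<noteq> 0"
    then have "\<forall>r. int r \<le> v x" using a unfolding Iv_def by auto
    then have "int (nat (v x) + 1) \<le> v x" by blast
    then show False by linarith
  qed
qed (simp add: Iv_def)

lemma vc_all: "(\<forall>r\<in>{1::nat..}. val_cong v (int r) x y) \<longleftrightarrow> x = y"
proof
  assume a: "\<forall>r\<in>{1::nat..}. val_cong v (int r) x y"
  show "x = y"
  proof (rule ccontr)
    assume "x \<noteq> y"
    then have "int (nat (v (x - y)) + 1) \<le> v (x - y)" using a[rule_format, of "nat (v (x - y)) + 1"]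
      unfolding val_cong_def by auto
    then show False by linarith
  qed
qed (simp add: val_cong_def)

lemma U1_char: "U1 v n s = U1c v n s"
proof (cases s)
  case (enat r)
  then show ?thesis unfolding U1_def U1_fin_def U1c_def by (simp add: vc_Iv)
next
  case infinity
  have "U1 v n s = (\<Inter>r\<in>{1..}. U1_fin v n r)" unfolding U1_def infinity by simp
  also have "\<dots> = U1c v n s"
  proof -
    have 1: "u \<in> U1c v n s" if u: "u \<in> (\<Inter>r\<in>{1..}. U1_fin v n r)" for u
    proof -
      have g: "u \<in> GLn_O v n" using u unfolding U1_fin_def by auto
      have "u $$ (n - 1, k) - (if k = n - 1 then 1 else 0) \<in> Iv v s" if k: "k < n" for k
      proof -
        have "\<forall>r\<in>{1::nat..}. val_cong v (int r) (u $$ (n - 1, k)) (if k = n - 1 then 1 else 0)"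
          using u k unfolding U1_fin_def by auto
        then show ?thesis unfolding vc_all infinity Iv_inf by simp
      qed
      then show "u \<in> U1c v n s" using g unfolding U1c_def by auto
    qed
    have 2: "u \<in> (\<Inter>r\<in>{1..}. U1_fin v n r)" if u: "u \<in> U1c v n s" for u
      using u unfolding U1c_def U1_fin_def infinity Iv_inf val_cong_def by auto
    show ?thesis using 1 2 by blast
  qed
  finally show ?thesis .
qed

context
  fixes v :: "'f::field \<Rightarrow> int" and n :: nat
  assumes val: "valuation v" and n: "1 \<le> n"
begin

lemma U1c_carrier: "u \<in> U1c v n s \<Longrightarrow> u \<in> carrier_mat n n"
  unfolding U1c_def GLn_O_def by auto

lemma U1c_GLn: "u \<in> U1c v n s \<Longrightarrow> u \<in> GLn n"
  unfolding U1c_def GLn_O_def GLn_def by auto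

lemma U1c_one: "1\<^sub>m n \<in> U1c v n s"
  unfolding U1c_def using one_GLn_O[OF val] n by auto

lemma U1c_mono: "s \<le> s' \<Longrightarrow> U1c v n s' \<subseteq> U1c v n s"
  unfolding U1c_def using Iv_mono[OF val] by blast

lemma U1c_mult:
  assumes a: "A \<in> U1c v n s" and b: "B \<in> U1c v n s"
  shows "A * B \<in> U1c v n s"
proof -
  have A: "A \<in> carrier_mat n n" and B: "B \<in> carrier_mat n n" using a b by (auto dest: U1c_carrier)
  have OB: "B $$ (l, k) \<in> val_ring v" if "l < n" "k < n" for l k
    using b that unfolding U1c_def GLn_O_def by auto
  have "(A * B) $$ (n - 1, k) - (if k = n - 1 then 1 else 0) \<in> Iv v s" if k: "k < n" for k
  proof -
    have "(\<Sum>l<n. (A $$ (n - 1, l) - (if l = n - 1 then 1 else 0)) * B $$ (l, k)) \<in> Iv v s"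
      by (rule Iv_sum[OF val]) (use a k OB in \<open>auto simp: U1c_def intro!: Iv_mult[OF val]\<close>)
    moreover have "B $$ (n - 1, k) - (if k = n - 1 then 1 else 0) \<in> Iv v s" using b k unfolding U1c_def by auto
    ultimately have "(\<Sum>l<n. (A $$ (n - 1, l) - (if l = n - 1 then 1 else 0)) * B $$ (l, k))
       + (B $$ (n - 1, k) - (if k = n - 1 then 1 else 0)) \<in> Iv v s" by (rule Iv_add[OF val])
    then show ?thesis unfolding last_row_mult[OF A B k] by (simp only: add_diff_eq)
  qed
  then show ?thesis using GLn_O_mult[OF val] a b unfolding U1c_def by auto
qed

lemma U1c_inv:
  assumes a: "A \<in> U1c v n s"
  shows "invm A \<in> U1c v n s" "A * invm A = 1\<^sub>m n" "invm A * A = 1\<^sub>m n"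
proof -
  have A: "A \<in> carrier_mat n n" and g: "A \<in> GLn_O v n" using a unfolding U1c_def GLn_O_def by auto
  have d: "det A \<noteq> 0" using g unfolding GLn_O_def by auto
  note I = invm[OF val A d]
  show "A * invm A = 1\<^sub>m n" "invm A * A = 1\<^sub>m n" using I by auto
  have gi: "invm A \<in> GLn_O v n" by (rule invm_GLn_O[OF val g])
  have OB: "invm A $$ (l, k) \<in> val_ring v" if "l < n" "k < n" for l k
    using gi that unfolding GLn_O_def by auto
  have "invm A $$ (n - 1, k) - (if k = n - 1 then 1 else 0) \<in> Iv v s" if k: "k < n" for k
  proof -
    have S: "(\<Sum>l<n. (A $$ (n - 1, l) - (if l = n - 1 then 1 else 0)) * invm A $$ (l, k)) \<in> Iv v s"
      by (rule Iv_sum[OF val]) (use a k OB in \<open>auto simp: U1c_def intro!: Iv_mult[OF val]\<close>)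
    have "(A * invm A) $$ (n - 1, k) = (if k = n - 1 then 1 else 0)" using I(2) k n by simp
    then have "invm A $$ (n - 1, k) - (if k = n - 1 then 1 else 0) =
       - (\<Sum>l<n. (A $$ (n - 1, l) - (if l = n - 1 then 1 else 0)) * invm A $$ (l, k))"
      using last_row_mult[OF A I(1) k] by (simp add: algebra_simps)
    then show ?thesis using Iv_uminus[OF val S] by simp
  qed
  then show "invm A \<in> U1c v n s" using gi unfolding U1c_def by auto
qed

end


lemma GLn_mult: "A \<in> GLn n \<Longrightarrow> B \<in> GLn n \<Longrightarrow> A * B \<in> GLn n"
proof -
  assume a: "A \<in> GLn n" "B \<in> GLn n"
  then have A: "A \<in> carrier_mat n n" and B: "B \<in> carrier_mat n n" and d: "det A \<noteq> 0" "det B \<noteq> 0"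
    unfolding GLn_def by auto
  have "det (A * B) = det A * det B" by (rule det_mult[OF A B])
  then show ?thesis unfolding GLn_def using A B d by auto
qed

lemma alpha_carrier: "alpha unif n j \<in> carrier_mat n n"
  unfolding alpha_def by simp

lemma alpha_index: "i < n \<Longrightarrow> k < n \<Longrightarrow>
   alpha unif n j $$ (i, k) = (if i = k then (if i < j then unif else 1) else 0)"
  unfolding alpha_def by simp

lemma alpha_right:
  fixes A :: "'f::field mat"
  assumes A: "A \<in> carrier_mat n n" and ik: "i < n" "k < n"
  shows "(A * alpha unif n j) $$ (i, k) = A $$ (i, k) * (if k < j then unif else 1)"
proof -
  have "(A * alpha unif n j) $$ (i, k) = (\<Sum>l<n. A $$ (i, l) * alpha unif n j $$ (l, k))"
    by (rule mult_entry[OF A alpha_carrier ik])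
  also have "\<dots> = (\<Sum>l<n. if l = k then A $$ (i, l) * (if l < j then unif else 1) else 0)"
    by (rule sum.cong) (auto simp: alpha_index ik)
  also have "\<dots> = A $$ (i, k) * (if k < j then unif else 1)" using ik by (simp add: sum.delta')
  finally show ?thesis .
qed

lemma alpha_left:
  fixes A :: "'f::field mat"
  assumes A: "A \<in> carrier_mat n n" and ik: "i < n" "k < n"
  shows "(alpha unif n j * A) $$ (i, k) = (if i < j then unif else 1) * A $$ (i, k)"
proof -
  have "(alpha unif n j * A) $$ (i, k) = (\<Sum>l<n. alpha unif n j $$ (i, l) * A $$ (l, k))"
    by (rule mult_entry[OF alpha_carrier A ik])
  also have "\<dots> = (\<Sum>l<n. if l = i then (if l < j then unif else 1) * A $$ (l, k) else 0)"
    by (rule sum.cong) (auto simp: alpha_index ik)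
  also have "\<dots> = (if i < j then unif else 1) * A $$ (i, k)" using ik by (simp add: sum.delta')
  finally show ?thesis .
qed

lemma alpha_GLn:
  assumes "(unif::'f::field) \<noteq> 0"
  shows "alpha unif n j \<in> GLn n"
proof -
  have "det (alpha unif n j) = prod_list (diag_mat (alpha unif n j))"
    by (rule det_upper_triangular[OF _ alpha_carrier]) (auto simp: alpha_def)
  also have "\<dots> = (\<Prod>i = 0..<n. (if i < j then unif else 1))"
    unfolding prod_list_diag_prod by (simp add: alpha_def)
  finally have "det (alpha unif n j) \<noteq> 0" using assms by simp
  then show ?thesis unfolding GLn_def using alpha_carrier by auto
qed

context
  fixes v :: "'f::field \<Rightarrow> int" and n :: nat and unif :: 'f and j :: nat
  assumes val: "valuation v" and n: "1 \<le> n" and uO: "unif \<in> val_ring v" and jn: "j \<le> n - 1"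
begin

lemma conj_level:
  assumes m: "m \<in> U1c v n s" and g: "g \<in> U1c v n s'" and eq: "m * alpha unif n j = alpha unif n j * g"
  shows "g \<in> U1c v n s"
proof -
  have M: "m \<in> carrier_mat n n" and G: "g \<in> carrier_mat n n" using m g by (auto simp: U1c_def GLn_O_def)
  have "g $$ (n - 1, k) - (if k = n - 1 then 1 else 0) \<in> Iv v s" if k: "k < n" for k
  proof -
    have nl: "n - 1 < n" using n by simp
    have "(m * alpha unif n j) $$ (n - 1, k) = (alpha unif n j * g) $$ (n - 1, k)" using eq by simp
    then have e: "m $$ (n - 1, k) * (if k < j then unif else 1) = g $$ (n - 1, k)"
      unfolding alpha_right[OF M nl k] alpha_left[OF G nl k] using jn by simp
    have mk: "m $$ (n - 1, k) - (if k = n - 1 then 1 else 0) \<in> Iv v s" using m k unfolding U1c_def by auto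
    show ?thesis
    proof (cases "k < j")
      case True
      then have "k \<noteq> n - 1" using jn by simp
      then show ?thesis using e True mk Iv_mult[OF val, of "m $$ (n - 1, k)" s unif] uO by simp
    next
      case False
      then show ?thesis using e mk by simp
    qed
  qed
  then show ?thesis using g unfolding U1c_def by auto
qed

lemma decomp:
  assumes a: "a \<in> U1c v n (enat r)" and r: "1 \<le> r"
  shows "\<exists>w t'. w \<in> U1c v n \<infinity> \<and> t' \<in> U1c v n (enat r) \<and>
     a * alpha unif n j = w * alpha unif n j * t'"
proof -
  let ?d = "\<lambda>k. if k < j then unif else (1::'f)"
  define t where "t = mat n n (\<lambda>(i, k). if i = n - 1 then a $$ (i, k) else (if i = k then 1 else 0))"
  define t' where "t' = mat n n (\<lambda>(i, k). if i = n - 1 then a $$ (i, k) * ?d k else (if i = k then 1 else 0))"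
  have A: "a \<in> carrier_mat n n" using a by (auto simp: U1c_def GLn_O_def)
  have aO: "a $$ (i, k) \<in> val_ring v" if "i < n" "k < n" for i k using a that by (auto simp: U1c_def GLn_O_def)
  have alast: "a $$ (n - 1, k) - (if k = n - 1 then 1 else 0) \<in> Iv v (enat r)" if "k < n" for k
    using a that by (auto simp: U1c_def)
  have T: "t \<in> carrier_mat n n" and T': "t' \<in> carrier_mat n n" unfolding t_def t'_def by auto
  have nl: "n - 1 < n" using n by simp
  have "Iv v (enat r) \<subseteq> Iv v 1" using Iv_mono[OF val, of 1 "enat r"] r by (simp add: one_enat_def)
  then have u: "a $$ (n - 1, n - 1) \<noteq> 0 \<and> v (a $$ (n - 1, n - 1)) = 0"
    using v_unit[OF val, of "a $$ (n - 1, n - 1) - 1"] alast[OF nl] by auto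
  have dt: "det t = a $$ (n - 1, n - 1)"
  proof -
    have "det t = prod_list (diag_mat t)"
      by (rule det_lower_triangular[OF _ T]) (auto simp: t_def)
    also have "\<dots> = (\<Prod>i = 0..<n. t $$ (i, i))" unfolding prod_list_diag_prod using T by simp
    also have "\<dots> = (\<Prod>i = 0..<n. if i = n - 1 then a $$ (n - 1, n - 1) else 1)"
      by (rule prod.cong) (auto simp: t_def)
    also have "\<dots> = a $$ (n - 1, n - 1)" using nl by (simp add: prod.delta')
    finally show ?thesis .
  qed
  have dt': "det t' = a $$ (n - 1, n - 1)"
  proof -
    have "det t' = prod_list (diag_mat t')"
      by (rule det_lower_triangular[OF _ T']) (auto simp: t'_def)
    also have "\<dots> = (\<Prod>i = 0..<n. t' $$ (i, i))" unfolding prod_list_diag_prod using T' by simp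
    also have "\<dots> = (\<Prod>i = 0..<n. if i = n - 1 then a $$ (n - 1, n - 1) else 1)"
      by (rule prod.cong) (use jn in \<open>auto simp: t'_def\<close>)
    also have "\<dots> = a $$ (n - 1, n - 1)" using nl by (simp add: prod.delta')
    finally show ?thesis .
  qed
  have tU: "t \<in> U1c v n (enat r)"
    unfolding U1c_def GLn_O_def using T dt u alast aO nl O_0[OF val] O_1[OF val] by (auto simp: t_def)
  have dO: "?d k \<in> val_ring v" for k using uO O_1[OF val] by simp
  have t'last: "t' $$ (n - 1, k) - (if k = n - 1 then 1 else 0) \<in> Iv v (enat r)" if k: "k < n" for k
  proof (cases "k < j")
    case True
    then have "k \<noteq> n - 1" using jn by simp
    then show ?thesis using True k alast[OF k] Iv_mult[OF val, of "a $$ (n - 1, k)" "enat r" unif] uO nl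
      by (simp add: t'_def)
  next
    case False
    then show ?thesis using k alast[OF k] nl by (simp add: t'_def)
  qed
  have t'U: "t' \<in> U1c v n (enat r)"
    unfolding U1c_def GLn_O_def using T' dt' u t'last O_0[OF val] O_1[OF val] aO dO uO
    by (auto simp: t'_def intro!: O_mult[OF val])
  have comm: "t * alpha unif n j = alpha unif n j * t'"
  proof (rule eq_matI)
    fix i k assume ik: "i < dim_row (alpha unif n j * t')" "k < dim_col (alpha unif n j * t')"
    then have ik: "i < n" "k < n" using T' alpha_carrier[of unif n j] by auto
    show "(t * alpha unif n j) $$ (i, k) = (alpha unif n j * t') $$ (i, k)"
      unfolding alpha_right[OF T ik] alpha_left[OF T' ik] using ik jn by (auto simp: t_def t'_def)
  qed (use T T' alpha_carrier[of unif n j] in auto)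
  have dtnz: "det t \<noteq> 0" using dt u by simp
  note TI = invm[OF val T dtnz]
  define w where "w = a * invm t"
  have W: "w \<in> carrier_mat n n" unfolding w_def using A TI by simp
  have wg: "w \<in> GLn_O v n" unfolding w_def
    by (rule GLn_O_mult[OF val]) (use a invm_GLn_O[OF val] tU in \<open>auto simp: U1c_def\<close>)
  have wlast: "w $$ (n - 1, k) = (if k = n - 1 then 1 else 0)" if k: "k < n" for k
  proof -
    have "w $$ (n - 1, k) = (\<Sum>l<n. a $$ (n - 1, l) * invm t $$ (l, k))"
      unfolding w_def by (rule mult_entry[OF A TI(1) nl k])
    also have "\<dots> = (\<Sum>l<n. t $$ (n - 1, l) * invm t $$ (l, k))"
      by (rule sum.cong) (auto simp: t_def nl)
    also have "\<dots> = (t * invm t) $$ (n - 1, k)" by (rule mult_entry[OF T TI(1) nl k, symmetric])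
    also have "\<dots> = (if k = n - 1 then 1 else 0)" using TI(2) k nl by simp
    finally show ?thesis .
  qed
  have wU: "w \<in> U1c v n \<infinity>" unfolding U1c_def using wg wlast by auto
  have "w * t = a" unfolding w_def using A TI T by simp
  then have "a * alpha unif n j = w * t * alpha unif n j" by simp
  also have "\<dots> = w * (t * alpha unif n j)" by (rule assoc_mult_mat[OF W T alpha_carrier])
  also have "\<dots> = w * (alpha unif n j * t')" unfolding comm ..
  also have "\<dots> = w * alpha unif n j * t'" by (rule assoc_mult_mat[OF W alpha_carrier T', symmetric])
  finally show ?thesis using wU t'U by blast
qed

end


context
  fixes v :: "'f::field \<Rightarrow> int" and n :: nat
  assumes val: "valuation v" and n: "1 \<le> n"
begin

lemma coset_mult:
  assumes h: "h \<in> carrier_mat n n" and g: "g \<in> U1c v n s"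
  shows "(\<lambda>u. h * g * u) ` U1c v n s = (\<lambda>u. h * u) ` U1c v n s"
proof
  have G: "g \<in> carrier_mat n n" using g by (rule U1c_carrier[OF val n])
  show "(\<lambda>u. h * g * u) ` U1c v n s \<subseteq> (\<lambda>u. h * u) ` U1c v n s"
  proof
    fix y assume "y \<in> (\<lambda>u. h * g * u) ` U1c v n s"
    then obtain u where u: "u \<in> U1c v n s" and y: "y = h * g * u" by auto
    have U: "u \<in> carrier_mat n n" using u by (rule U1c_carrier[OF val n])
    have "y = h * (g * u)" unfolding y by (rule assoc_mult_mat[OF h G U])
    moreover have "g * u \<in> U1c v n s" by (rule U1c_mult[OF val n g u])
    ultimately show "y \<in> (\<lambda>u. h * u) ` U1c v n s" by blast
  qed
  show "(\<lambda>u. h * u) ` U1c v n s \<subseteq> (\<lambda>u. h * g * u) ` U1c v n s"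
  proof
    fix y assume "y \<in> (\<lambda>u. h * u) ` U1c v n s"
    then obtain u where u: "u \<in> U1c v n s" and y: "y = h * u" by auto
    have U: "u \<in> carrier_mat n n" using u by (rule U1c_carrier[OF val n])
    note gi = U1c_inv[OF val n g]
    have GI: "invm g \<in> carrier_mat n n" using gi(1) by (rule U1c_carrier[OF val n])
    have "h * g * (invm g * u) = h * (g * (invm g * u))"
      by (rule assoc_mult_mat[OF h G mult_carrier_mat[OF GI U]])
    also have "g * (invm g * u) = (g * invm g) * u" by (rule assoc_mult_mat[OF G GI U, symmetric])
    also have "\<dots> = u" using gi(2) U by simp
    finally have "y = h * g * (invm g * u)" unfolding y by simp
    moreover have "invm g * u \<in> U1c v n s" by (rule U1c_mult[OF val n gi(1) u])
    ultimately show "y \<in> (\<lambda>u. h * g * u) ` U1c v n s" by blast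
  qed
qed

lemma coset_f:
  assumes h: "h \<in> carrier_mat n n" and ss: "s' \<le> s"
  shows "(\<Union>c\<in>(\<lambda>u. h * u) ` U1c v n s. (\<lambda>u. c * u) ` U1c v n s') = (\<lambda>u. h * u) ` U1c v n s'"
proof -
  have "(\<Union>c\<in>(\<lambda>u. h * u) ` U1c v n s. (\<lambda>u. c * u) ` U1c v n s')
      = (\<Union>w\<in>U1c v n s. (\<lambda>u. h * w * u) ` U1c v n s')" by auto
  also have "\<dots> = (\<Union>w\<in>U1c v n s. (\<lambda>u. h * u) ` U1c v n s')"
  proof (rule SUP_cong[OF refl])
    fix w assume "w \<in> U1c v n s"
    then have "w \<in> U1c v n s'" using U1c_mono[OF val n ss] by blast
    then show "(\<lambda>u. h * w * u) ` U1c v n s' = (\<lambda>u. h * u) ` U1c v n s'" by (rule coset_mult[OF h])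
  qed
  also have "\<dots> = (\<lambda>u. h * u) ` U1c v n s'" using U1c_one[OF val n, of s] by auto
  finally show ?thesis .
qed

lemma some_coset:
  assumes h: "h \<in> GLn n" and x: "x \<in> invariants act (U1c v n s)"
    and law: "\<forall>g\<in>GLn n. \<forall>h\<in>GLn n. \<forall>x. act (g * h) x = act g (act h x)"
  shows "act (SOME c. c \<in> (\<lambda>u. h * u) ` U1c v n s) x = act h x"
proof -
  have "\<exists>c. c \<in> (\<lambda>u. h * u) ` U1c v n s" using U1c_one[OF val n, of s] by blast
  then have "(SOME c. c \<in> (\<lambda>u. h * u) ` U1c v n s) \<in> (\<lambda>u. h * u) ` U1c v n s" by (rule someI_ex)
  then obtain u where u: "u \<in> U1c v n s" and e: "(SOME c. c \<in> (\<lambda>u. h * u) ` U1c v n s) = h * u" by auto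
  have "act (h * u) x = act h (act u x)" using law h U1c_GLn[OF val n u] by blast
  also have "act u x = x" using x u unfolding invariants_def by blast
  finally show ?thesis unfolding e .
qed

lemma dc_GLn:
  assumes "unif \<noteq> 0" and "h \<in> double_coset (U1c v n s) (alpha unif n j)"
  shows "h \<in> GLn n"
proof -
  obtain a b where a: "a \<in> U1c v n s" and b: "b \<in> U1c v n s" and h: "h = a * alpha unif n j * b"
    using assms(2) unfolding double_coset_def by blast
  show ?thesis unfolding h
    by (intro GLn_mult U1c_GLn[OF val n a] U1c_GLn[OF val n b] alpha_GLn[OF assms(1)])
qed

lemma dc_mono:
  assumes "s' \<le> s"
  shows "double_coset (U1c v n s) g \<subseteq> double_coset (U1c v n s') g"
  using U1c_mono[OF val n assms] unfolding double_coset_def by blast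

end

lemma hecke_eq:
  fixes v :: "'f::field \<Rightarrow> int"
  assumes val: "valuation v" and n: "1 \<le> n" and uO: "unif \<in> val_ring v" and jn: "j \<le> n - 1"
    and u0: "unif \<noteq> 0" and r: "1 \<le> r" and rs: "enat r \<le> s"
    and law: "\<forall>g\<in>GLn n. \<forall>h\<in>GLn n. \<forall>x. act (g * h) x = act g (act h x)"
    and x: "x \<in> invariants act (U1c v n (enat r))"
  shows "hecke act (U1c v n (enat r)) (alpha unif n j) x = hecke act (U1c v n s) (alpha unif n j) x"
proof -
  define U where "U = U1c v n (enat r)"
  define W where "W = U1c v n s"
  define \<alpha> where "\<alpha> = alpha unif n j"
  define S where "S = left_cosets_in (double_coset W \<alpha>) W"
  define T where "T = left_cosets_in (double_coset U \<alpha>) U"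
  define f where "f = (\<lambda>C. \<Union>c\<in>C. (\<lambda>u. c * u) ` U)"
  define g where "g = (\<lambda>C. act (SOME h. h \<in> C) x)"
  have WU: "W \<subseteq> U" unfolding W_def U_def by (rule U1c_mono[OF val n rs])
  have xW: "x \<in> invariants act W" using x WU unfolding U_def invariants_def by blast
  have Acar: "\<alpha> \<in> carrier_mat n n" unfolding \<alpha>_def by (rule alpha_carrier)
  have Ucar: "u \<in> U \<Longrightarrow> u \<in> carrier_mat n n" for u unfolding U_def by (rule U1c_carrier[OF val n])
  have Wcar: "u \<in> W \<Longrightarrow> u \<in> carrier_mat n n" for u unfolding W_def by (rule U1c_carrier[OF val n])
  have DW: "h \<in> double_coset W \<alpha> \<Longrightarrow> h \<in> GLn n" for h
    unfolding W_def \<alpha>_def by (rule dc_GLn[OF val n u0])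
  have DWc: "h \<in> double_coset W \<alpha> \<Longrightarrow> h \<in> carrier_mat n n" for h using DW unfolding GLn_def by auto
  have DWU: "double_coset W \<alpha> \<subseteq> double_coset U \<alpha>" unfolding W_def U_def by (rule dc_mono[OF val n rs])
  have fC: "f ((\<lambda>u. h * u) ` W) = (\<lambda>u. h * u) ` U" if "h \<in> carrier_mat n n" for h
    unfolding f_def W_def U_def by (rule coset_f[OF val n that rs])
  have gW: "g ((\<lambda>u. h * u) ` W) = act h x" if "h \<in> GLn n" for h
    unfolding g_def W_def by (rule some_coset[OF val n that _ law]) (use xW W_def in simp)
  have gU: "g ((\<lambda>u. h * u) ` U) = act h x" if "h \<in> GLn n" for h
    unfolding g_def U_def by (rule some_coset[OF val n that _ law]) (use x in simp)
  have claim1: "g (f C) = g C" if CS: "C \<in> S" for C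
  proof -
    obtain h where h: "h \<in> double_coset W \<alpha>" and C: "C = (\<lambda>u. h * u) ` W"
      using CS unfolding S_def left_cosets_in_def by blast
    show ?thesis unfolding C fC[OF DWc[OF h]] gW[OF DW[OF h]] gU[OF DW[OF h]] ..
  qed
  have bij: "bij_betw f S T"
  proof (rule bij_betw_imageI)
    show "inj_on f S"
    proof (rule inj_onI)
      fix C1 C2 assume C1: "C1 \<in> S" and C2: "C2 \<in> S" and eq: "f C1 = f C2"
      obtain h where h: "h \<in> double_coset W \<alpha>" and C1e: "C1 = (\<lambda>u. h * u) ` W"
        using C1 unfolding S_def left_cosets_in_def by blast
      obtain h' where h': "h' \<in> double_coset W \<alpha>" and C2e: "C2 = (\<lambda>u. h' * u) ` W"
        using C2 unfolding S_def left_cosets_in_def by blast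
      obtain a b where a: "a \<in> W" and b: "b \<in> W" and he: "h = a * \<alpha> * b"
        using h unfolding double_coset_def by blast
      obtain a' b' where a': "a' \<in> W" and b': "b' \<in> W" and he': "h' = a' * \<alpha> * b'"
        using h' unfolding double_coset_def by blast
      have H: "h \<in> carrier_mat n n" and H': "h' \<in> carrier_mat n n" using DWc h h' by auto
      have "(\<lambda>u. h * u) ` U = (\<lambda>u. h' * u) ` U" using eq unfolding C1e C2e fC[OF H] fC[OF H'] .
      moreover have "h' \<in> (\<lambda>u. h' * u) ` U" using U1c_one[OF val n] H' unfolding U_def by force
      ultimately obtain u where u: "u \<in> U" and hu: "h' = h * u" by auto
      have A: "a \<in> carrier_mat n n" and B: "b \<in> carrier_mat n n" and A': "a' \<in> carrier_mat n n"
        and B': "b' \<in> carrier_mat n n" and UC: "u \<in> carrier_mat n n" using a b a' b' u Wcar Ucar by auto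
      note ai = U1c_inv[OF val n a[unfolded W_def]]
      note bi = U1c_inv[OF val n b[unfolded W_def]]
      note bi' = U1c_inv[OF val n b'[unfolded W_def]]
      have AI: "invm a \<in> carrier_mat n n" and BI: "invm b \<in> carrier_mat n n"
        and BI': "invm b' \<in> carrier_mat n n" using ai(1) bi(1) bi'(1) by (auto dest: U1c_carrier[OF val n])
      define m where "m = invm a * a'"
      define gg where "gg = b * u * invm b'"
      have mW: "m \<in> W" unfolding m_def W_def by (rule U1c_mult[OF val n ai(1) a'[unfolded W_def]])
      have ggU: "gg \<in> U" unfolding gg_def U_def
        by (rule U1c_mult[OF val n U1c_mult[OF val n _ u[unfolded U_def]]])
           (use b WU bi'(1) WU in \<open>auto simp: U_def W_def\<close>)
      have key: "a' * \<alpha> * b' = a * \<alpha> * b * u" using hu he he' by simp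
      have "m * \<alpha> = invm a * a' * \<alpha> * (b' * invm b')"
        using bi'(2) AI A' Acar unfolding m_def by simp
      also have "\<dots> = invm a * (a' * \<alpha> * b') * invm b'"
        using AI A' Acar B' BI' by (simp add: assoc_mult_mat[of _ n n _ n _ n])
      also have "\<dots> = invm a * (a * \<alpha> * b * u) * invm b'" unfolding key ..
      also have "\<dots> = (invm a * a) * \<alpha> * (b * u * invm b')"
        using AI A Acar B UC BI' by (simp add: assoc_mult_mat[of _ n n _ n _ n])
      also have "\<dots> = \<alpha> * gg" unfolding gg_def using ai(3) Acar by simp
      finally have mg: "m * \<alpha> = \<alpha> * gg" .
      have ggW: "gg \<in> W" unfolding W_def
        by (rule conj_level[OF val n uO jn mW[unfolded W_def] ggU[unfolded U_def] mg[unfolded \<alpha>_def]])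
      have GG: "gg \<in> carrier_mat n n" using ggW Wcar by auto
      have "invm b * gg * b' = (invm b * b) * u * (invm b' * b')"
        unfolding gg_def using BI B UC BI' B' by (simp add: assoc_mult_mat[of _ n n _ n _ n])
      also have "\<dots> = u" using bi(3) bi'(3) UC by simp
      finally have ue: "u = invm b * gg * b'" by simp
      have uW: "u \<in> W" unfolding ue W_def
        by (rule U1c_mult[OF val n U1c_mult[OF val n bi(1) ggW[unfolded W_def]] b'[unfolded W_def]])
      show "C1 = C2" unfolding C1e C2e hu W_def by (rule coset_mult[OF val n H uW[unfolded W_def], symmetric])
    qed
  next
    show "f ` S = T"
    proof
      show "f ` S \<subseteq> T"
      proof
        fix D assume "D \<in> f ` S"
        then obtain h where h: "h \<in> double_coset W \<alpha>" and D: "D = f ((\<lambda>u. h * u) ` W)"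
          unfolding S_def left_cosets_in_def by blast
        have "D = (\<lambda>u. h * u) ` U" unfolding D by (rule fC[OF DWc[OF h]])
        then show "D \<in> T" using DWU h unfolding T_def left_cosets_in_def by blast
      qed
      show "T \<subseteq> f ` S"
      proof
        fix D assume "D \<in> T"
        then obtain h where h: "h \<in> double_coset U \<alpha>" and D: "D = (\<lambda>u. h * u) ` U"
          unfolding T_def left_cosets_in_def by blast
        obtain a b where a: "a \<in> U" and b: "b \<in> U" and he: "h = a * \<alpha> * b"
          using h unfolding double_coset_def by blast
        obtain w t' where w: "w \<in> U1c v n \<infinity>" and t': "t' \<in> U1c v n (enat r)"
          and dec: "a * \<alpha> = w * \<alpha> * t'"
          using decomp[OF val n uO jn a[unfolded U_def] r] unfolding \<alpha>_def by blast
        have wW: "w \<in> W" using w U1c_mono[OF val n, of s \<infinity>] unfolding W_def by auto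
        have Wc: "w \<in> carrier_mat n n" and T': "t' \<in> carrier_mat n n" and B: "b \<in> carrier_mat n n"
          using wW Wcar t' b Ucar unfolding U_def by auto
        define h0 where "h0 = w * \<alpha> * 1\<^sub>m n"
        have h0D: "h0 \<in> double_coset W \<alpha>" unfolding h0_def double_coset_def
          using wW U1c_one[OF val n, of s] unfolding W_def by blast
        have h0e: "h0 = w * \<alpha>" unfolding h0_def using Wc Acar by simp
        have H0: "h0 \<in> carrier_mat n n" using h0e Wc Acar by simp
        have tbU: "t' * b \<in> U" unfolding U_def by (rule U1c_mult[OF val n t' b[unfolded U_def]])
        have "h = w * \<alpha> * t' * b" unfolding he dec ..
        also have "\<dots> = h0 * (t' * b)" unfolding h0e using Wc Acar T' B
          by (simp add: assoc_mult_mat[of _ n n _ n _ n])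
        finally have "D = (\<lambda>u. h0 * (t' * b) * u) ` U" unfolding D by simp
        also have "\<dots> = (\<lambda>u. h0 * u) ` U" unfolding U_def
          by (rule coset_mult[OF val n H0 tbU[unfolded U_def]])
        also have "\<dots> = f ((\<lambda>u. h0 * u) ` W)" by (rule fC[OF H0, symmetric])
        finally show "D \<in> f ` S" using h0D unfolding S_def left_cosets_in_def by blast
      qed
    qed
  qed
  have "hecke act W \<alpha> x = (\<Sum>C\<in>S. g C)" unfolding hecke_def S_def g_def ..
  also have "\<dots> = (\<Sum>C\<in>S. g (f C))" by (rule sum.cong) (simp_all add: claim1)
  also have "\<dots> = (\<Sum>C\<in>T. g C)" by (rule sum.reindex_bij_betw[OF bij])
  also have "\<dots> = hecke act U \<alpha> x" unfolding hecke_def T_def g_def ..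
  finally show ?thesis unfolding U_def W_def \<alpha>_def by simp
qed


theorem lemma2:
  fixes p l n r :: nat and s :: enat
    and v :: "'f::field_char_0 \<Rightarrow> int" and unif :: 'f
    and w :: "'k::field_char_0 \<Rightarrow> int" and \<iota> :: "'k \<Rightarrow> 'a::comm_ring_1"
    and sm :: "'a \<Rightarrow> 'v::ab_group_add \<Rightarrow> 'v" and act :: "'f mat \<Rightarrow> 'v \<Rightarrow> 'v"
  assumes F: "p_adic_local_field p v" and uni: "unif \<noteq> 0" "v unif = 1"
    and K: "p_adic_local_field l w" and lp: "l \<noteq> p"
    and banal: "\<not> l dvd gl_card (residue_card v) n"
    and Aalg: "O_algebra w \<iota>"
    and n: "1 \<le> n"
    and V: "smooth_rep v n sm act"
    and rs: "0 < r" "enat r \<le> s"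
  shows "invariants act (U1 v n (enat r)) \<subseteq> invariants act (U1 v n s)
    \<and> (\<forall>j\<in>{1..n-1}. \<forall>x\<in>invariants act (U1 v n (enat r)).
          hecke act (U1 v n (enat r)) (alpha unif n j) x = hecke act (U1 v n s) (alpha unif n j) x)
    \<and> (torsion_free sm UNIV \<longrightarrow>
        (\<forall>a. \<forall>x\<in>invariants act (U1 v n s).
           sm a x \<in> invariants act (U1 v n (enat r)) \<longrightarrow>
           x \<in> invariants act (U1 v n (enat r)) \<or> zero_divisor a))"
proof -
  have val: "valuation v" by (rule valuation_of_local[OF F])
  have uO: "unif \<in> val_ring v" using uni unfolding val_ring_def by simp
  have md: "Modules.module sm" using V unfolding smooth_rep_def by blast
  have law: "\<forall>g\<in>GLn n. \<forall>h\<in>GLn n. \<forall>x. act (g * h) x = act g (act h x)"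
    using V unfolding smooth_rep_def by blast
  have comm: "\<forall>g\<in>GLn n. \<forall>a x. act g (sm a x) = sm a (act g x)"
    using V unfolding smooth_rep_def by blast
  have eqU: "U1 v n (enat r) = U1c v n (enat r)" and eqW: "U1 v n s = U1c v n s" by (rule U1_char)+
  have WU: "U1c v n s \<subseteq> U1c v n (enat r)" by (rule U1c_mono[OF val n rs(2)])
  have r1: "1 \<le> r" using rs(1) by simp
  have P1: "invariants act (U1 v n (enat r)) \<subseteq> invariants act (U1 v n s)"
    unfolding eqU eqW invariants_def using WU by blast
  have P2: "\<forall>j\<in>{1..n-1}. \<forall>x\<in>invariants act (U1 v n (enat r)).
          hecke act (U1 v n (enat r)) (alpha unif n j) x = hecke act (U1 v n s) (alpha unif n j) x"
  proof (intro ballI)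
    fix j x assume j: "j \<in> {1..n-1}" and x: "x \<in> invariants act (U1 v n (enat r))"
    have jn: "j \<le> n - 1" using j by simp
    show "hecke act (U1 v n (enat r)) (alpha unif n j) x = hecke act (U1 v n s) (alpha unif n j) x"
      unfolding eqU eqW by (rule hecke_eq[OF val n uO jn uni(1) r1 rs(2) law x[unfolded eqU]])
  qed
  have P3: "torsion_free sm UNIV \<longrightarrow>
        (\<forall>a. \<forall>x\<in>invariants act (U1 v n s).
           sm a x \<in> invariants act (U1 v n (enat r)) \<longrightarrow>
           x \<in> invariants act (U1 v n (enat r)) \<or> zero_divisor a)"
  proof (intro impI allI ballI)
    fix a x assume tf: "torsion_free sm UNIV" and x: "x \<in> invariants act (U1 v n s)"
      and ax: "sm a x \<in> invariants act (U1 v n (enat r))"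
    show "x \<in> invariants act (U1 v n (enat r)) \<or> zero_divisor a"
    proof (cases "zero_divisor a")
      case False
      have "act u x = x" if u: "u \<in> U1 v n (enat r)" for u
      proof -
        have ug: "u \<in> GLn n" using u unfolding eqU by (rule U1c_GLn[OF val n])
        have "sm a (act u x - x) = sm a (act u x) - sm a x"
          by (rule module.scale_right_diff_distrib[OF md])
        also have "sm a (act u x) = act u (sm a x)" using comm ug by simp
        also have "act u (sm a x) = sm a x" using ax u unfolding invariants_def by blast
        finally have "sm a (act u x - x) = 0" by simp
        then have "act u x - x = 0" using tf False unfolding torsion_free_def by blast
        then show ?thesis by simp
      qed
      then show ?thesis unfolding invariants_def by blast
    qed simp
  qed
  show ?thesis using P1 P2 P3 by blast
qed

end
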